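(* Let $\boldsymbol{\mathcal{D}} = \begin{pmatrix}\boldsymbol{W}_p\\ \boldsymbol{U}_f \\ \boldsymbol{Y}_f\end{pmatrix}\in\mathbb{R}^{L(m+p)\times \ell}$ be a data matrix with full row rank, with LQ decomposition $\boldsymbol{\mathcal{D}} = \begin{pmatrix} \boldsymbol{L}_{11} & \boldsymbol{0} & \boldsymbol{0} & \boldsymbol{0} \\ \boldsymbol{L}_{21} & \boldsymbol{L}_{22} & \boldsymbol{0} & \boldsymbol{0} \\ \boldsymbol{L}_{31} & \boldsymbol{L}_{32} & \boldsymbol{L}_{33} & \boldsymbol{0} \end{pmatrix}\begin{pmatrix}\boldsymbol{Q}_1\\ \boldsymbol{Q}_2\\ \boldsymbol{Q}_3\\ \boldsymbol{Q}_4\end{pmatrix}$ as described in the context, and let $\lambda_a>0$. Then DeePC with regularization $h(\boldsymbol{a}) = \lambda_a \|\boldsymbol{a}\|_2^2$ is equivalent to $\boldsymbol{\gamma}$-DDPC with regularization $\tilde h(\boldsymbol{\gamma}) = \lambda_a \|\boldsymbol{\gamma}_2\|_2^2 + \lambda_a \|\boldsymbol{\gamma}_3\|_2^2$.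
   Context: Data: $m$ inputs, $p$ outputs, past horizon $N_p$, future horizon $N_f$, $L=N_p+N_f$, and $\ell$ data trajectories. The data matrix is partitioned as $\boldsymbol{\mathcal{D}} = \begin{pmatrix}\boldsymbol{W}_p\\ \boldsymbol{U}_f \\ \boldsymbol{Y}_f\end{pmatrix}$ with $\boldsymbol{W}_p\in\mathbb{R}^{N_p(m+p)\times\ell}$ (past inputs and outputs), $\boldsymbol{U}_f\in\mathbb{R}^{mN_f\times \ell}$, $\boldsymbol{Y}_f\in\mathbb{R}^{pN_f\times\ell}$; it is assumed to have full row rank. The LQ decomposition has lower block-triangular factor with non-singular square diagonal blocks $\boldsymbol{L}_{11},\boldsymbol{L}_{22},\boldsymbol{L}_{33}$ and $\boldsymbol{Q}=\begin{pmatrix}\boldsymbol{Q}_1^\top & \boldsymbol{Q}_2^\top&\boldsymbol{Q}_3^\top&\boldsymbol{Q}_4^\top\end{pmatrix}^\top\in\mathbb{R}^{\ell\times\ell}$ orthogonal (so $\boldsymbol{Q}_i\boldsymbol{Q}_i^\top=\boldsymbol{I}$, $\boldsymbol{Q}_i\boldsymbol{Q}_j^\top=\boldsymbol{0}$ for $i\neq j$); $\boldsymbol{\gamma}_i := \boldsymbol{Q}_i\boldsymbol{a}$. Given current past I/O data $\boldsymbol{\xi}\in\mathbb{R}^{N_p(m+p)}$, a cost $J(\boldsymbol{\xi},\mathbf{u}_f,\mathbf{y}_f)$ and constraint sets $\mathcal{U}\subseteq\mathbb{R}^{mN_f}$, $\mathcal{Y}\subseteq\mathbb{R}^{pN_f}$: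 DeePC with regularization $h$ is the problem $\min_{\mathbf{u}_f,\mathbf{y}_f,\boldsymbol{a}} J(\boldsymbol{\xi},\mathbf{u}_f,\mathbf{y}_f)+h(\boldsymbol{a})$ s.t. $(\boldsymbol{\xi};\mathbf{u}_f;\mathbf{y}_f)=\boldsymbol{\mathcal{D}}\boldsymbol{a}$, $(\mathbf{u}_f,\mathbf{y}_f)\in\mathcal{U}\times\mathcal{Y}$. $\boldsymbol{\gamma}$-DDPC with regularization $\tilde h$ is the problem $\min_{\mathbf{u}_f,\mathbf{y}_f,\boldsymbol{\gamma}_2,\boldsymbol{\gamma}_3} J(\boldsymbol{\xi},\mathbf{u}_f,\mathbf{y}_f)+\tilde h(\boldsymbol{\gamma})$ s.t. $\boldsymbol{\gamma}_1=\boldsymbol{L}_{11}^{-1}\boldsymbol{\xi}$, $\mathbf{u}_f = \boldsymbol{L}_{21}\boldsymbol{\gamma}_1+\boldsymbol{L}_{22}\boldsymbol{\gamma}_2$, $\mathbf{y}_f=\boldsymbol{L}_{31}\boldsymbol{\gamma}_1+\boldsymbol{L}_{32}\boldsymbol{\gamma}_2+\boldsymbol{L}_{33}\boldsymbol{\gamma}_3$, $(\mathbf{u}_f,\mathbf{y}_f)\in\mathcal{U}\times\mathcal{Y}$ (i.e., $\boldsymbol{\gamma}_4=\boldsymbol{0}$ is fixed). Two such optimal control problems are called equivalent if, for every $\boldsymbol{\xi}$, they yield the same optimal predicted input/output trajectories $(\mathbf{u}_f^\ast,\mathbf{y}_f^\ast)$ (not necessarily the same optimal cost). *)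

theory Defs
  imports "Jordan_Normal_Form.DL_Rank"
begin

definition sqnorm :: "real vec \<Rightarrow> real" where
  "sqnorm v = v \<bullet> v"

definition deepc_feasible ::
  "real mat \<Rightarrow> nat \<Rightarrow> real vec set \<Rightarrow> real vec set \<Rightarrow> real vec \<Rightarrow> real vec \<Rightarrow> real vec \<Rightarrow> real vec \<Rightarrow> bool" where
  "deepc_feasible D ell U Y xi u y a \<longleftrightarrow>
     a \<in> carrier_vec ell \<and> D *\<^sub>v a = xi @\<^sub>v u @\<^sub>v y \<and> u \<in> U \<and> y \<in> Y"

definition deepc_opt ::
  "(real vec \<Rightarrow> real vec \<Rightarrow> real vec \<Rightarrow> real) \<Rightarrow> (real vec \<Rightarrow> real) \<Rightarrow> real mat \<Rightarrow> nat \<Rightarrow>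
   real vec set \<Rightarrow> real vec set \<Rightarrow> real vec \<Rightarrow> (real vec \<times> real vec) set" where
  "deepc_opt J h D ell U Y xi =
     {(u, y). \<exists>a. deepc_feasible D ell U Y xi u y a \<and>
        (\<forall>u' y' a'. deepc_feasible D ell U Y xi u' y' a' \<longrightarrow>
            J xi u y + h a \<le> J xi u' y' + h a')}"

text \<open>gamma-DDPC: decision variables (u_f, y_f, gamma_2, gamma_3);
  gamma_1 = L11^{-1} xi (the unique solution of L11 gamma_1 = xi), gamma_4 = 0 fixed.\<close>
definition ddpc_gamma1 :: "real mat \<Rightarrow> real vec \<Rightarrow> real vec" where
  "ddpc_gamma1 L11 xi = (THE g. g \<in> carrier_vec (dim_col L11) \<and> L11 *\<^sub>v g = xi)"

definition ddpc_feasible ::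
  "real mat \<Rightarrow> real mat \<Rightarrow> real mat \<Rightarrow> real mat \<Rightarrow> real mat \<Rightarrow> real mat \<Rightarrow>
   real vec set \<Rightarrow> real vec set \<Rightarrow> real vec \<Rightarrow> real vec \<Rightarrow> real vec \<Rightarrow> real vec \<Rightarrow> real vec \<Rightarrow> bool" where
  "ddpc_feasible L11 L21 L22 L31 L32 L33 U Y xi u y g2 g3 \<longleftrightarrow>
     g2 \<in> carrier_vec (dim_col L22) \<and> g3 \<in> carrier_vec (dim_col L33) \<and>
     u = L21 *\<^sub>v ddpc_gamma1 L11 xi + L22 *\<^sub>v g2 \<and>
     y = L31 *\<^sub>v ddpc_gamma1 L11 xi + L32 *\<^sub>v g2 + L33 *\<^sub>v g3 \<and>
     u \<in> U \<and> y \<in> Y"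

definition ddpc_opt ::
  "(real vec \<Rightarrow> real vec \<Rightarrow> real vec \<Rightarrow> real) \<Rightarrow> (real vec \<times> real vec \<times> real vec \<times> real vec \<Rightarrow> real) \<Rightarrow>
   real mat \<Rightarrow> real mat \<Rightarrow> real mat \<Rightarrow> real mat \<Rightarrow> real mat \<Rightarrow> real mat \<Rightarrow> nat \<Rightarrow>
   real vec set \<Rightarrow> real vec set \<Rightarrow> real vec \<Rightarrow> (real vec \<times> real vec) set" where
  "ddpc_opt J ht L11 L21 L22 L31 L32 L33 n4 U Y xi =
     {(u, y). \<exists>g2 g3. ddpc_feasible L11 L21 L22 L31 L32 L33 U Y xi u y g2 g3 \<and>
        (\<forall>u' y' g2' g3'. ddpc_feasible L11 L21 L22 L31 L32 L33 U Y xi u' y' g2' g3' \<longrightarrow>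
            J xi u y + ht (ddpc_gamma1 L11 xi, g2, g3, 0\<^sub>v n4)
              \<le> J xi u' y' + ht (ddpc_gamma1 L11 xi, g2', g3', 0\<^sub>v n4))}"

definition equivalent_ocp ::
  "nat \<Rightarrow> (real vec \<Rightarrow> (real vec \<times> real vec) set) \<Rightarrow> (real vec \<Rightarrow> (real vec \<times> real vec) set) \<Rightarrow> bool" where
  "equivalent_ocp n P1 P2 \<longleftrightarrow> (\<forall>xi \<in> carrier_vec n. P1 xi = P2 xi)"

end

theory Submission
  imports Defs
begin


lemma gamma1_eq:
  assumes L: "L \<in> carrier_mat n n" and inv: "invertible_mat L"
    and g: "g \<in> carrier_vec n" and eq: "L *\<^sub>v g = xi"
  shows "ddpc_gamma1 L xi = g"
proof -
  from inv obtain B where LB: "L * B = 1\<^sub>m n" and BL: "B * L = 1\<^sub>m (dim_row B)"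
    using L unfolding invertible_mat_def inverts_mat_def by auto
  have Bc: "dim_col B = n" using LB by (metis index_mult_mat(3) index_one_mat(3))
  have Br: "dim_row B = n" using BL L by (metis carrier_matD(2) index_mult_mat(3) index_one_mat(3))
  have B: "B \<in> carrier_mat n n" using Bc Br by auto
  have uniq: "h = g" if h: "h \<in> carrier_vec n" "L *\<^sub>v h = xi" for h
  proof -
    have "h = (B * L) *\<^sub>v h" using BL Br h by (simp only: one_mult_mat_vec)
    also have "\<dots> = B *\<^sub>v (L *\<^sub>v h)" by (rule assoc_mult_mat_vec[OF B L h(1)])
    also have "\<dots> = B *\<^sub>v (L *\<^sub>v g)" using h eq by simp
    also have "\<dots> = (B * L) *\<^sub>v g" by (rule assoc_mult_mat_vec[OF B L g, symmetric])
    also have "\<dots> = g" using BL Br g by (simp only: one_mult_mat_vec)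
    finally show ?thesis .
  qed
  have dc: "dim_col L = n" using L by (rule carrier_matD(2))
  show ?thesis unfolding ddpc_gamma1_def dc
  proof (rule the_equality)
    show "g \<in> carrier_vec n \<and> L *\<^sub>v g = xi" using g eq by (rule conjI)
  next
    fix h assume "h \<in> carrier_vec n \<and> L *\<^sub>v h = xi"
    thus "h = g" using uniq by blast
  qed
qed

lemma gamma1_ex:
  assumes L: "L \<in> carrier_mat n n" and inv: "invertible_mat L" and xi: "xi \<in> carrier_vec n"
  shows "ddpc_gamma1 L xi \<in> carrier_vec n \<and> L *\<^sub>v ddpc_gamma1 L xi = xi"
proof -
  from inv obtain B where LB: "L * B = 1\<^sub>m n" and BL: "B * L = 1\<^sub>m (dim_row B)"
    using L unfolding invertible_mat_def inverts_mat_def by auto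
  have Bc: "dim_col B = n" using LB by (metis index_mult_mat(3) index_one_mat(3))
  have Br: "dim_row B = n" using BL L by (metis carrier_matD(2) index_mult_mat(3) index_one_mat(3))
  have B: "B \<in> carrier_mat n n" using Bc Br by auto
  have "L *\<^sub>v (B *\<^sub>v xi) = (L * B) *\<^sub>v xi" by (rule assoc_mult_mat_vec[OF L B xi, symmetric])
  also have "\<dots> = xi" using LB xi by (simp only: one_mult_mat_vec)
  finally have "L *\<^sub>v (B *\<^sub>v xi) = xi" .
  moreover have "B *\<^sub>v xi \<in> carrier_vec n" using B xi by auto
  ultimately show ?thesis using gamma1_eq[OF L inv] by simp
qed

lemma sqnorm_append:
  assumes "v \<in> carrier_vec n" "w \<in> carrier_vec k"
  shows "sqnorm (v @\<^sub>v w) = sqnorm v + sqnorm w"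
  unfolding sqnorm_def using scalar_prod_append[OF assms assms] .

lemma ddpc_opt_intro:
  assumes feas: "ddpc_feasible L11 L21 L22 L31 L32 L33 U Y xi u y g2 g3"
    and optd: "\<forall>u' y' g2' g3'. ddpc_feasible L11 L21 L22 L31 L32 L33 U Y xi u' y' g2' g3' \<longrightarrow>
          J xi u y + (lam * sqnorm g2 + lam * sqnorm g3)
            \<le> J xi u' y' + (lam * sqnorm g2' + lam * sqnorm g3')"
  shows "(u, y) \<in> ddpc_opt J (\<lambda>(g1, g2, g3, g4). lam * sqnorm g2 + lam * sqnorm g3) L11 L21 L22 L31 L32 L33 n4 U Y xi"
  unfolding ddpc_opt_def mem_Collect_eq case_prod_conv
  using feas optd by blast
lemma deepc_opt_intro:
  assumes feas: "deepc_feasible D ell U Y xi u y a"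
    and optd: "\<forall>u' y' a'. deepc_feasible D ell U Y xi u' y' a' \<longrightarrow>
          J xi u y + h a \<le> J xi u' y' + h a'"
  shows "(u, y) \<in> deepc_opt J h D ell U Y xi"
  unfolding deepc_opt_def mem_Collect_eq case_prod_conv
  using feas optd by blast

theorem proposition3:
  fixes m p Np Nf ell n4 :: nat
    and Wp Uf Yf L11 L21 L22 L31 L32 L33 Q1 Q2 Q3 Q4 :: "real mat"
    and lam :: real
    and J :: "real vec \<Rightarrow> real vec \<Rightarrow> real vec \<Rightarrow> real"
    and U Y :: "real vec set"
  defines "n1 \<equiv> Np * (m + p)" and "n2 \<equiv> m * Nf" and "n3 \<equiv> p * Nf"
  defines "D \<equiv> Wp @\<^sub>r Uf @\<^sub>r Yf"
      and "Q \<equiv> Q1 @\<^sub>r Q2 @\<^sub>r Q3 @\<^sub>r Q4"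
  assumes Wp: "Wp \<in> carrier_mat n1 ell"
    and Uf: "Uf \<in> carrier_mat n2 ell"
    and Yf: "Yf \<in> carrier_mat n3 ell"
    and full_row_rank: "vec_space.rank (n1 + n2 + n3) D = n1 + n2 + n3"
    and L11: "L11 \<in> carrier_mat n1 n1" and L21: "L21 \<in> carrier_mat n2 n1"
    and L22: "L22 \<in> carrier_mat n2 n2" and L31: "L31 \<in> carrier_mat n3 n1"
    and L32: "L32 \<in> carrier_mat n3 n2" and L33: "L33 \<in> carrier_mat n3 n3"
    and inv11: "invertible_mat L11" and inv22: "invertible_mat L22"
    and inv33: "invertible_mat L33"
    and Q1: "Q1 \<in> carrier_mat n1 ell" and Q2: "Q2 \<in> carrier_mat n2 ell"
    and Q3: "Q3 \<in> carrier_mat n3 ell" and Q4: "Q4 \<in> carrier_mat n4 ell"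
    and Q_square: "Q \<in> carrier_mat ell ell"
    and Q_orth: "Q * Q\<^sup>T = 1\<^sub>m ell"
    and LQ_W: "Wp = L11 * Q1"
    and LQ_U: "Uf = L21 * Q1 + L22 * Q2"
    and LQ_Y: "Yf = L31 * Q1 + L32 * Q2 + L33 * Q3"
    and lam_pos: "lam > 0"
    and U: "U \<subseteq> carrier_vec n2"
    and Y: "Y \<subseteq> carrier_vec n3"
  shows "equivalent_ocp n1
           (deepc_opt J (\<lambda>a. lam * sqnorm a) D ell U Y)
           (ddpc_opt J (\<lambda>(g1, g2, g3, g4). lam * sqnorm g2 + lam * sqnorm g3)
              L11 L21 L22 L31 L32 L33 n4 U Y)"
  proof -
  note dims = Wp Uf Yf L11 L21 L22 L31 L32 L33 Q1 Q2 Q3 Q4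
  have QT: "Q\<^sup>T \<in> carrier_mat ell ell" using Q_square by auto
  have QtQ: "Q\<^sup>T * Q = 1\<^sub>m ell"
    using mat_mult_left_right_inverse[OF Q_square QT Q_orth] .
  have Qc: "Q \<in> carrier_mat (n1 + (n2 + (n3 + n4))) ell"
    unfolding Q_def by (intro carrier_append_rows Q1 Q2 Q3 Q4)
  have ell_eq: "ell = n1 + (n2 + (n3 + n4))" using Qc Q_square by auto
  have Qv: "Q *\<^sub>v a = (Q1 *\<^sub>v a) @\<^sub>v (Q2 *\<^sub>v a) @\<^sub>v (Q3 *\<^sub>v a) @\<^sub>v (Q4 *\<^sub>v a)"
    if a: "a \<in> carrier_vec ell" for a
  proof -
    have c34: "Q3 @\<^sub>r Q4 \<in> carrier_mat (n3 + n4) ell" using Q3 Q4 by (rule carrier_append_rows)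
    have c234: "Q2 @\<^sub>r Q3 @\<^sub>r Q4 \<in> carrier_mat (n2 + (n3 + n4)) ell" using Q2 c34 by (rule carrier_append_rows)
    show ?thesis unfolding Q_def
      mat_mult_append[OF Q1 c234 a] mat_mult_append[OF Q2 c34 a] mat_mult_append[OF Q3 Q4 a] ..
  qed
  have Dv: "D *\<^sub>v a = (Wp *\<^sub>v a) @\<^sub>v (Uf *\<^sub>v a) @\<^sub>v (Yf *\<^sub>v a)"
    if a: "a \<in> carrier_vec ell" for a
  proof -
    have c: "Uf @\<^sub>r Yf \<in> carrier_mat (n2 + n3) ell" using Uf Yf by (rule carrier_append_rows)
    show ?thesis unfolding D_def
      mat_mult_append[OF Wp c a] mat_mult_append[OF Uf Yf a] ..
  qed
  have norm: "sqnorm a = sqnorm (Q1 *\<^sub>v a) + sqnorm (Q2 *\<^sub>v a) + sqnorm (Q3 *\<^sub>v a) + sqnorm (Q4 *\<^sub>v a)"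
    if a: "a \<in> carrier_vec ell" for a
  proof -
    have Qa: "Q *\<^sub>v a \<in> carrier_vec ell" using Q_square a by auto
    have "a = Q\<^sup>T *\<^sub>v (Q *\<^sub>v a)" using QtQ QT Q_square a
      by (metis assoc_mult_mat_vec one_mult_mat_vec)
    hence "sqnorm a = (Q\<^sup>T *\<^sub>v (Q *\<^sub>v a)) \<bullet> (Q\<^sup>T *\<^sub>v (Q *\<^sub>v a))" unfolding sqnorm_def by simp
    also have "\<dots> = (Q *\<^sub>v a) \<bullet> (Q *\<^sub>v (Q\<^sup>T *\<^sub>v (Q *\<^sub>v a)))"
      by (rule transpose_vec_mult_scalar[OF Q_square _ Qa], insert QT Qa, auto)
    also have "Q *\<^sub>v (Q\<^sup>T *\<^sub>v (Q *\<^sub>v a)) = Q *\<^sub>v a"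
      using Q_orth QT Q_square Qa by (metis assoc_mult_mat_vec one_mult_mat_vec)
    finally have "sqnorm a = sqnorm (Q *\<^sub>v a)" unfolding sqnorm_def .
    moreover have v1: "Q1 *\<^sub>v a \<in> carrier_vec n1" using Q1 a by auto
    moreover have v2: "Q2 *\<^sub>v a \<in> carrier_vec n2" using Q2 a by auto
    moreover have v3: "Q3 *\<^sub>v a \<in> carrier_vec n3" using Q3 a by auto
    moreover have v4: "Q4 *\<^sub>v a \<in> carrier_vec n4" using Q4 a by auto
    moreover have w3: "(Q3 *\<^sub>v a) @\<^sub>v (Q4 *\<^sub>v a) \<in> carrier_vec (n3 + n4)" using v3 v4 by auto
    moreover have w2: "(Q2 *\<^sub>v a) @\<^sub>v (Q3 *\<^sub>v a) @\<^sub>v (Q4 *\<^sub>v a) \<in> carrier_vec (n2 + (n3 + n4))" using v2 w3 by auto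
    ultimately show ?thesis unfolding Qv[OF a]
      sqnorm_append[OF v1 w2] sqnorm_append[OF v2 w3] sqnorm_append[OF v3 v4] by simp
  qed
  have recon: "Q1 *\<^sub>v a = g1 \<and> Q2 *\<^sub>v a = g2 \<and> Q3 *\<^sub>v a = g3 \<and> Q4 *\<^sub>v a = g4 \<and> a \<in> carrier_vec ell"
    if a: "a = Q\<^sup>T *\<^sub>v (g1 @\<^sub>v g2 @\<^sub>v g3 @\<^sub>v g4)" and g: "g1 \<in> carrier_vec n1" "g2 \<in> carrier_vec n2"
      "g3 \<in> carrier_vec n3" "g4 \<in> carrier_vec n4" for a g1 g2 g3 g4
  proof -
    have gc: "g1 @\<^sub>v g2 @\<^sub>v g3 @\<^sub>v g4 \<in> carrier_vec ell"
      unfolding ell_eq by (intro append_carrier_vec g)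
    have ac: "a \<in> carrier_vec ell" unfolding a using QT gc by (rule mult_mat_vec_carrier)
    have "Q *\<^sub>v a = (Q * Q\<^sup>T) *\<^sub>v (g1 @\<^sub>v g2 @\<^sub>v g3 @\<^sub>v g4)" unfolding a
      by (rule assoc_mult_mat_vec[OF Q_square QT gc, symmetric])
    also have "\<dots> = g1 @\<^sub>v g2 @\<^sub>v g3 @\<^sub>v g4" unfolding Q_orth using gc by (rule one_mult_mat_vec)
    finally have "(Q1 *\<^sub>v a) @\<^sub>v (Q2 *\<^sub>v a) @\<^sub>v (Q3 *\<^sub>v a) @\<^sub>v (Q4 *\<^sub>v a) = g1 @\<^sub>v g2 @\<^sub>v g3 @\<^sub>v g4"
      using Qv[OF ac] by simp
    moreover have v1: "Q1 *\<^sub>v a \<in> carrier_vec n1" using Q1 ac by auto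
    moreover have v2: "Q2 *\<^sub>v a \<in> carrier_vec n2" using Q2 ac by auto
    moreover have v3: "Q3 *\<^sub>v a \<in> carrier_vec n3" using Q3 ac by auto
    ultimately show ?thesis using ac
      unfolding append_vec_eq[OF v1 g(1)] append_vec_eq[OF v2 g(2)] append_vec_eq[OF v3 g(3)] by simp
  qed
  show ?thesis unfolding equivalent_ocp_def
  proof
    fix xi :: "real vec" assume xi: "xi \<in> carrier_vec n1"
    define g1 where "g1 = ddpc_gamma1 L11 xi"
    have g1: "g1 \<in> carrier_vec n1" "L11 *\<^sub>v g1 = xi"
      using gamma1_ex[OF L11 inv11 xi] unfolding g1_def by auto
    define c where "c = lam * sqnorm g1"
    have lam0: "lam \<ge> 0" using lam_pos by simp
    have sq0: "sqnorm v \<ge> 0" for v unfolding sqnorm_def scalar_prod_def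
      by (intro sum_nonneg) auto
    have A: "ddpc_feasible L11 L21 L22 L31 L32 L33 U Y xi u y (Q2 *\<^sub>v a) (Q3 *\<^sub>v a) \<and>
        lam * sqnorm a \<ge> lam * sqnorm (Q2 *\<^sub>v a) + lam * sqnorm (Q3 *\<^sub>v a) + c"
      if f: "deepc_feasible D ell U Y xi u y a" for u y a
    proof -
      have a: "a \<in> carrier_vec ell" and eq: "D *\<^sub>v a = xi @\<^sub>v u @\<^sub>v y" and uy: "u \<in> U" "y \<in> Y"
        using f unfolding deepc_feasible_def by auto
      have uc: "u \<in> carrier_vec n2" "y \<in> carrier_vec n3" using uy U Y by auto
      have "(Wp *\<^sub>v a) @\<^sub>v (Uf *\<^sub>v a) @\<^sub>v (Yf *\<^sub>v a) = xi @\<^sub>v u @\<^sub>v y" using eq Dv[OF a] by simp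
      moreover have w1: "Wp *\<^sub>v a \<in> carrier_vec n1" using Wp a by auto
      moreover have w2: "Uf *\<^sub>v a \<in> carrier_vec n2" using Uf a by auto
      ultimately have e: "Wp *\<^sub>v a = xi" "Uf *\<^sub>v a = u" "Yf *\<^sub>v a = y"
        unfolding append_vec_eq[OF w1 xi] append_vec_eq[OF w2 uc(1)] by simp_all
      have q1: "Q1 *\<^sub>v a \<in> carrier_vec n1" using Q1 a by auto
      have "L11 *\<^sub>v (Q1 *\<^sub>v a) = xi" using e LQ_W dims a by simp
      hence G: "g1 = Q1 *\<^sub>v a" unfolding g1_def using gamma1_eq[OF L11 inv11 q1] by simp
      have U': "u = L21 *\<^sub>v g1 + L22 *\<^sub>v (Q2 *\<^sub>v a)"
        using e LQ_U dims a G by (simp add: add_mult_distrib_mat_vec[of _ n2 ell])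
      have Y': "y = L31 *\<^sub>v g1 + L32 *\<^sub>v (Q2 *\<^sub>v a) + L33 *\<^sub>v (Q3 *\<^sub>v a)"
        using e LQ_Y dims a G by (simp add: add_mult_distrib_mat_vec[of _ n3 ell])
      have feas: "ddpc_feasible L11 L21 L22 L31 L32 L33 U Y xi u y (Q2 *\<^sub>v a) (Q3 *\<^sub>v a)"
        unfolding ddpc_feasible_def using U' Y' uy dims a by (auto simp: g1_def)
      have "lam * sqnorm a = lam * sqnorm (Q2 *\<^sub>v a) + lam * sqnorm (Q3 *\<^sub>v a) + c + lam * sqnorm (Q4 *\<^sub>v a)"
        unfolding norm[OF a] c_def G by (simp add: algebra_simps)
      moreover have "lam * sqnorm (Q4 *\<^sub>v a) \<ge> 0" using lam0 sq0 by simp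
      ultimately show ?thesis using feas by linarith
    qed
    have B: "deepc_feasible D ell U Y xi u y (Q\<^sup>T *\<^sub>v (g1 @\<^sub>v g2 @\<^sub>v g3 @\<^sub>v 0\<^sub>v n4)) \<and>
        lam * sqnorm (Q\<^sup>T *\<^sub>v (g1 @\<^sub>v g2 @\<^sub>v g3 @\<^sub>v 0\<^sub>v n4)) = lam * sqnorm g2 + lam * sqnorm g3 + c"
      if f: "ddpc_feasible L11 L21 L22 L31 L32 L33 U Y xi u y g2 g3" for u y g2 g3
    proof -
      define a where "a = Q\<^sup>T *\<^sub>v (g1 @\<^sub>v g2 @\<^sub>v g3 @\<^sub>v 0\<^sub>v n4)"
      have g: "g2 \<in> carrier_vec n2" "g3 \<in> carrier_vec n3" and uy: "u \<in> U" "y \<in> Y"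
        and U': "u = L21 *\<^sub>v g1 + L22 *\<^sub>v g2"
        and Y': "y = L31 *\<^sub>v g1 + L32 *\<^sub>v g2 + L33 *\<^sub>v g3"
        using f dims unfolding ddpc_feasible_def g1_def by auto
      have r: "Q1 *\<^sub>v a = g1" "Q2 *\<^sub>v a = g2" "Q3 *\<^sub>v a = g3" "Q4 *\<^sub>v a = 0\<^sub>v n4" and a: "a \<in> carrier_vec ell"
        using recon[OF a_def g1(1) g] by auto
      have "Wp *\<^sub>v a = xi" using LQ_W dims a r g1 by simp
      moreover have "Uf *\<^sub>v a = u" using LQ_U dims a r U' by (simp add: add_mult_distrib_mat_vec[of _ n2 ell])
      moreover have "Yf *\<^sub>v a = y" using LQ_Y dims a r Y' by (simp add: add_mult_distrib_mat_vec[of _ n3 ell])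
      ultimately have "D *\<^sub>v a = xi @\<^sub>v u @\<^sub>v y" using Dv[OF a] by simp
      hence feas: "deepc_feasible D ell U Y xi u y a" unfolding deepc_feasible_def using a uy by auto
      have "sqnorm (0\<^sub>v n4) = 0" unfolding sqnorm_def by simp
      hence "lam * sqnorm a = lam * sqnorm g2 + lam * sqnorm g3 + c"
        unfolding norm[OF a] r c_def by (simp add: algebra_simps)
      then show ?thesis using feas unfolding a_def by simp
    qed
    show "deepc_opt J (\<lambda>a. lam * sqnorm a) D ell U Y xi =
      ddpc_opt J (\<lambda>(g1, g2, g3, g4). lam * sqnorm g2 + lam * sqnorm g3) L11 L21 L22 L31 L32 L33 n4 U Y xi"
    proof (intro equalityI subsetI)
      fix z assume "z \<in> deepc_opt J (\<lambda>a. lam * sqnorm a) D ell U Y xi"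
      then obtain u y a where z: "z = (u, y)" and fa: "deepc_feasible D ell U Y xi u y a"
        and opt: "\<And>u' y' a'. deepc_feasible D ell U Y xi u' y' a' \<Longrightarrow>
            J xi u y + lam * sqnorm a \<le> J xi u' y' + lam * sqnorm a'"
        unfolding deepc_opt_def by auto
      note A1 = A[OF fa]
      have feas: "ddpc_feasible L11 L21 L22 L31 L32 L33 U Y xi u y (Q2 *\<^sub>v a) (Q3 *\<^sub>v a)" using A1 by simp
      have optd: "\<forall>u' y' g2' g3'. ddpc_feasible L11 L21 L22 L31 L32 L33 U Y xi u' y' g2' g3' \<longrightarrow>
          J xi u y + (lam * sqnorm (Q2 *\<^sub>v a) + lam * sqnorm (Q3 *\<^sub>v a))
            \<le> J xi u' y' + (lam * sqnorm g2' + lam * sqnorm g3')"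
      proof (intro allI impI)
        fix u' y' g2' g3' assume f': "ddpc_feasible L11 L21 L22 L31 L32 L33 U Y xi u' y' g2' g3'"
        note B1 = B[OF f']
        have "J xi u y + lam * sqnorm a \<le> J xi u' y' + lam * sqnorm g2' + lam * sqnorm g3' + c"
          using opt[OF conjunct1[OF B1]] conjunct2[OF B1] by simp
        then show "J xi u y + (lam * sqnorm (Q2 *\<^sub>v a) + lam * sqnorm (Q3 *\<^sub>v a))
            \<le> J xi u' y' + (lam * sqnorm g2' + lam * sqnorm g3')" using A1 by linarith
      qed
      show "z \<in> ddpc_opt J (\<lambda>(g1, g2, g3, g4). lam * sqnorm g2 + lam * sqnorm g3) L11 L21 L22 L31 L32 L33 n4 U Y xi"
        unfolding z using feas optd by (rule ddpc_opt_intro)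
    next
      fix z assume "z \<in> ddpc_opt J (\<lambda>(g1, g2, g3, g4). lam * sqnorm g2 + lam * sqnorm g3) L11 L21 L22 L31 L32 L33 n4 U Y xi"
      then obtain u y g2 g3 where z: "z = (u, y)" and fa: "ddpc_feasible L11 L21 L22 L31 L32 L33 U Y xi u y g2 g3"
        and opt: "\<And>u' y' g2' g3'. ddpc_feasible L11 L21 L22 L31 L32 L33 U Y xi u' y' g2' g3' \<Longrightarrow>
            J xi u y + (lam * sqnorm g2 + lam * sqnorm g3) \<le> J xi u' y' + (lam * sqnorm g2' + lam * sqnorm g3')"
        unfolding ddpc_opt_def by auto
      note B1 = B[OF fa]
      define a where "a = Q\<^sup>T *\<^sub>v (g1 @\<^sub>v g2 @\<^sub>v g3 @\<^sub>v 0\<^sub>v n4)"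
      have feas: "deepc_feasible D ell U Y xi u y a" using B1 unfolding a_def by simp
      have optd: "\<forall>u' y' a'. deepc_feasible D ell U Y xi u' y' a' \<longrightarrow>
          J xi u y + lam * sqnorm a \<le> J xi u' y' + lam * sqnorm a'"
      proof (intro allI impI)
        fix u' y' a' assume f': "deepc_feasible D ell U Y xi u' y' a'"
        note A1 = A[OF f']
        have "J xi u y + (lam * sqnorm g2 + lam * sqnorm g3) \<le> J xi u' y' + (lam * sqnorm (Q2 *\<^sub>v a') + lam * sqnorm (Q3 *\<^sub>v a'))"
          using opt A1 by blast
        then show "J xi u y + lam * sqnorm a \<le> J xi u' y' + lam * sqnorm a'"
          using A1 B1 unfolding a_def by linarith
      qed
      show "z \<in> deepc_opt J (\<lambda>a. lam * sqnorm a) D ell U Y xi"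
        unfolding z using feas optd by (rule deepc_opt_intro)
    qed
  qed
qed

end
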